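(* Assume that (CVOP) has a solution, and let $\bar S\subseteq S_a$ be a solution of the associated projection (Pv) satisfying $Y_a=\operatorname{conv}\operatorname{proj}_y[\bar S]$. Then $\bar X:=\{x:(x,y)\in\bar S,\ y\notin\Gamma[\mathcal{X}]+(C\setminus\{0\})\}$ is a solution of (CVOP).
   Context: (CVOP): $\min\Gamma(x)$ w.r.t. $\le_C$ s.t. $x\in\mathcal{X}$, with $C\subseteq\mathbb{R}^m$ a non-trivial pointed solid convex cone, $\mathcal{X}\subseteq\mathbb{R}^n$ convex, $\Gamma$ $C$-convex; upper image $\mathcal{G}=\operatorname{cl}(\Gamma[\mathcal{X}]+C)$. $\bar x\in\mathcal{X}$ is a minimizer if $(\Gamma(\bar x)-C\setminus\{0\})\cap\Gamma[\mathcal{X}]=\emptyset$. $\bar X\subseteq\mathcal{X}$ is an infimizer if $\mathcal{G}=\operatorname{cl}\operatorname{conv}(\Gamma[\bar X]+C)$, and a solution if it is an infimizer consisting of minimizers only. $S_a=\{(x,y):x\in\mathcal{X},y\in\Gamma(x)+C\}$, $Y_a=\operatorname{proj}_y[S_a]$, and $\bar S\subseteq S_a$ is a solution of (Pv) if $Y_a\subseteq\operatorname{cl}\operatorname{conv}\operatorname{proj}_y[\bar S]$. *)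

theory Defs
  imports "HOL-Analysis.Analysis"
begin

definition msum :: "'b::real_vector set \<Rightarrow> 'b set \<Rightarrow> 'b set" where
  "msum A B = {a + b | a b. a \<in> A \<and> b \<in> B}"

definition ordering_cone :: "'b::euclidean_space set \<Rightarrow> bool" where
  "ordering_cone C \<longleftrightarrow> cone C \<and> convex C \<and> C \<noteq> {0} \<and> C \<noteq> UNIV
     \<and> C \<inter> uminus ` C = {0} \<and> interior C \<noteq> {}"

definition C_convex_on :: "'b::real_vector set \<Rightarrow> 'a::real_vector set \<Rightarrow> ('a \<Rightarrow> 'b) \<Rightarrow> bool" where
  "C_convex_on C X \<Gamma> \<longleftrightarrow> (\<forall>x\<in>X. \<forall>x'\<in>X. \<forall>t::real. 0 \<le> t \<and> t \<le> 1 \<longrightarrow>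
      t *\<^sub>R \<Gamma> x + (1 - t) *\<^sub>R \<Gamma> x' - \<Gamma> (t *\<^sub>R x + (1 - t) *\<^sub>R x') \<in> C)"

definition upper_image :: "'b::euclidean_space set \<Rightarrow> 'a set \<Rightarrow> ('a \<Rightarrow> 'b) \<Rightarrow> 'b set" where
  "upper_image C X \<Gamma> = closure (msum (\<Gamma> ` X) C)"

definition minimizer :: "'b::euclidean_space set \<Rightarrow> 'a set \<Rightarrow> ('a \<Rightarrow> 'b) \<Rightarrow> 'a \<Rightarrow> bool" where
  "minimizer C X \<Gamma> x \<longleftrightarrow> x \<in> X \<and>
     {\<Gamma> x - c | c. c \<in> C - {0}} \<inter> \<Gamma> ` X = {}"

definition infimizer :: "'b::euclidean_space set \<Rightarrow> 'a set \<Rightarrow> ('a \<Rightarrow> 'b) \<Rightarrow> 'a set \<Rightarrow> bool" where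
  "infimizer C X \<Gamma> Xb \<longleftrightarrow> Xb \<subseteq> X \<and>
     upper_image C X \<Gamma> = closure (convex hull (msum (\<Gamma> ` Xb) C))"

definition solution_CVOP :: "'b::euclidean_space set \<Rightarrow> 'a set \<Rightarrow> ('a \<Rightarrow> 'b) \<Rightarrow> 'a set \<Rightarrow> bool" where
  "solution_CVOP C X \<Gamma> Xb \<longleftrightarrow> infimizer C X \<Gamma> Xb \<and> (\<forall>x\<in>Xb. minimizer C X \<Gamma> x)"

definition S_a :: "'b::euclidean_space set \<Rightarrow> 'a set \<Rightarrow> ('a \<Rightarrow> 'b) \<Rightarrow> ('a \<times> 'b) set" where
  "S_a C X \<Gamma> = {(x, y). x \<in> X \<and> y \<in> msum {\<Gamma> x} C}"

definition Y_a :: "'b::euclidean_space set \<Rightarrow> 'a set \<Rightarrow> ('a \<Rightarrow> 'b) \<Rightarrow> 'b set" where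
  "Y_a C X \<Gamma> = snd ` S_a C X \<Gamma>"

definition solution_Pv :: "'b::euclidean_space set \<Rightarrow> 'a set \<Rightarrow> ('a \<Rightarrow> 'b) \<Rightarrow> ('a \<times> 'b) set \<Rightarrow> bool" where
  "solution_Pv C X \<Gamma> Sb \<longleftrightarrow> Sb \<subseteq> S_a C X \<Gamma> \<and>
     Y_a C X \<Gamma> \<subseteq> closure (convex hull (snd ` Sb))"

end

theory Submission
  imports Defs
begin

lemma oc_zero: "ordering_cone C \<Longrightarrow> 0 \<in> C"
  unfolding ordering_cone_def by (metis Int_iff insertI1)

lemma oc_add:
  assumes "ordering_cone C" "a \<in> C" "b \<in> C"
  shows "a + b \<in> C"
proof -
  have cv: "convex C" and cn: "cone C" using assms(1) unfolding ordering_cone_def by auto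
  have "(1/2) *\<^sub>R a + (1/2) *\<^sub>R b \<in> C"
    by (rule convexD[OF cv assms(2,3)]) auto
  hence "2 *\<^sub>R ((1/2) *\<^sub>R a + (1/2) *\<^sub>R b) \<in> C" using cn unfolding cone_def by auto
  thus ?thesis by (simp add: scaleR_add_right)
qed

lemma oc_add_nz:
  assumes "ordering_cone C" "a \<in> C" "b \<in> C" "b \<noteq> 0"
  shows "a + b \<noteq> 0"
proof
  assume "a + b = 0"
  hence "b = - a" by (simp add: eq_neg_iff_add_eq_0 add.commute)
  hence "b \<in> uminus ` C" using assms(2) by auto
  hence "b \<in> C \<inter> uminus ` C" using assms(3) by auto
  thus False using assms(1,4) unfolding ordering_cone_def by auto
qed

lemma key:
  fixes C :: "'b::euclidean_space set"
  assumes oc: "ordering_cone C" and Pc: "convex (msum (\<Gamma> ` X) C)"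
    and V: "V \<subseteq> msum (\<Gamma> ` X) C"
    and y: "y \<in> convex hull V" and yM: "y \<notin> msum (\<Gamma> ` X) (C - {0})"
  shows "y \<in> convex hull (V - msum (\<Gamma> ` X) (C - {0}))"
proof -
  define P where "P = msum (\<Gamma> ` X) C"
  define M where "M = msum (\<Gamma> ` X) (C - {0})"
  obtain S u where S: "finite S" "S \<subseteq> V" "\<forall>x\<in>S. 0 \<le> u x" "sum u S = 1"
    "(\<Sum>v\<in>S. u v *\<^sub>R v) = y"
    using y unfolding convex_hull_explicit by blast
  define S' where "S' = {v\<in>S. u v > 0}"
  have notM: "v \<notin> M" if v: "v \<in> S'" for v
  proof
    assume "v \<in> M"
    then obtain x c where xc: "x \<in> X" "c \<in> C" "c \<noteq> 0" "v = \<Gamma> x + c"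
      unfolding M_def msum_def by auto
    have uv: "u v > 0" "v \<in> S" using v unfolding S'_def by auto
    define f where "f w = (if w = v then \<Gamma> x else w)" for w
    have fP: "f w \<in> P" if "w \<in> S" for w
    proof (cases "w = v")
      case True
      have "\<Gamma> x + 0 \<in> P" unfolding P_def msum_def using xc oc_zero[OF oc] by blast
      thus ?thesis using True f_def by simp
    next
      case False thus ?thesis using that S(2) V f_def P_def by auto
    qed
    have z: "(\<Sum>w\<in>S. u w *\<^sub>R f w) \<in> P"
      using convex_sum[OF S(1) Pc[folded P_def] S(4)] S(3) fP by auto
    have "(\<Sum>w\<in>S. u w *\<^sub>R w) = (\<Sum>w\<in>S. u w *\<^sub>R f w + (if w = v then u w *\<^sub>R c else 0))"
      by (rule sum.cong) (auto simp: f_def xc(4) scaleR_add_right)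
    also have "\<dots> = (\<Sum>w\<in>S. u w *\<^sub>R f w) + u v *\<^sub>R c"
      using S(1) uv(2) by (simp add: sum.distrib)
    finally have ye: "y = (\<Sum>w\<in>S. u w *\<^sub>R f w) + u v *\<^sub>R c" using S(5) by simp
    obtain x' c' where x'c': "x' \<in> X" "c' \<in> C" "(\<Sum>w\<in>S. u w *\<^sub>R f w) = \<Gamma> x' + c'"
      using z unfolding P_def msum_def by auto
    have ucC: "u v *\<^sub>R c \<in> C" using oc xc(2) uv(1) unfolding ordering_cone_def cone_def by auto
    have ucnz: "u v *\<^sub>R c \<noteq> 0" using uv(1) xc(3) by simp
    have "c' + u v *\<^sub>R c \<in> C - {0}"
      using oc_add[OF oc x'c'(2) ucC] oc_add_nz[OF oc x'c'(2) ucC ucnz] by auto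
    moreover have "y = \<Gamma> x' + (c' + u v *\<^sub>R c)" using ye x'c'(3) by (simp add: add.assoc)
    ultimately have "y \<in> M" unfolding M_def msum_def using x'c'(1) by blast
    thus False using yM M_def by simp
  qed
  have "(\<Sum>v\<in>S. u v *\<^sub>R v) = (\<Sum>v\<in>S'. u v *\<^sub>R v)"
    using S(1,3) unfolding S'_def by (intro sum.mono_neutral_right) (auto simp: order.order_iff_strict)
  moreover have "sum u S = sum u S'"
    using S(1,3) unfolding S'_def by (intro sum.mono_neutral_right) (auto simp: order.order_iff_strict)
  moreover have "(\<Sum>v\<in>S'. u v *\<^sub>R v) \<in> convex hull (V - M)"
  proof (rule convex_sum)
    show "finite S'" using S(1) S'_def by simp
    show "convex (convex hull (V - M))" by (rule convex_convex_hull)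
    show "sum u S' = 1" using S(4) calculation(2) by simp
    show "\<And>i. i \<in> S' \<Longrightarrow> 0 \<le> u i" using S'_def by simp
    show "\<And>i. i \<in> S' \<Longrightarrow> i \<in> convex hull (V - M)"
      using notM S(2) S'_def by (intro hull_inc) auto
  qed
  ultimately show ?thesis using S(5) M_def by simp
qed

theorem mainTheorem14:
  fixes C :: "'b::euclidean_space set" and X :: "'a::euclidean_space set"
    and \<Gamma> :: "'a \<Rightarrow> 'b" and Sb :: "('a \<times> 'b) set"
  assumes "ordering_cone C" and "convex X" and "C_convex_on C X \<Gamma>"
    and "\<exists>Xs. solution_CVOP C X \<Gamma> Xs"
    and "solution_Pv C X \<Gamma> Sb"
    and "Y_a C X \<Gamma> = convex hull (snd ` Sb)"
  shows "solution_CVOP C X \<Gamma>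
           {x. \<exists>y. (x, y) \<in> Sb \<and> y \<notin> msum (\<Gamma> ` X) (C - {0})}"
proof -
  define P where "P = msum (\<Gamma> ` X) C"
  define M where "M = msum (\<Gamma> ` X) (C - {0})"
  define Xb where "Xb = {x. \<exists>y. (x, y) \<in> Sb \<and> y \<notin> M}"
  have oc: "ordering_cone C" by fact
  have YP: "Y_a C X \<Gamma> = P"
  proof
    show "Y_a C X \<Gamma> \<subseteq> P" unfolding Y_a_def S_a_def P_def msum_def by force
    show "P \<subseteq> Y_a C X \<Gamma>"
    proof
      fix z assume "z \<in> P"
      then obtain x c where xc: "x \<in> X" "c \<in> C" "z = \<Gamma> x + c" unfolding P_def msum_def by auto
      hence "(x, z) \<in> S_a C X \<Gamma>" unfolding S_a_def msum_def by auto
      thus "z \<in> Y_a C X \<Gamma>" unfolding Y_a_def by force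
    qed
  qed
  have Pc: "convex P" using assms(6) YP by (metis convex_convex_hull)
  have SbS: "Sb \<subseteq> S_a C X \<Gamma>" using assms(5) unfolding solution_Pv_def by blast
  have pair: "x \<in> X \<and> y = \<Gamma> x" if "(x, y) \<in> Sb" "y \<notin> M" for x y
  proof -
    from SbS that(1) obtain c where c: "x \<in> X" "c \<in> C" "y = \<Gamma> x + c"
      unfolding S_a_def msum_def by auto
    have "c = 0"
    proof (rule ccontr)
      assume "c \<noteq> 0"
      hence "y \<in> M" unfolding M_def msum_def using c by blast
      thus False using that by simp
    qed
    thus ?thesis using c by simp
  qed
  have XbX: "Xb \<subseteq> X" using pair Xb_def by auto
  have minim: "minimizer C X \<Gamma> x" if xXb: "x \<in> Xb" for x
  proof -
    obtain y where y: "(x, y) \<in> Sb" "y \<notin> M" using xXb Xb_def by auto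
    have xy: "x \<in> X" "y = \<Gamma> x" using pair[OF y] by auto
    have "{\<Gamma> x - c | c. c \<in> C - {0}} \<inter> \<Gamma> ` X = {}"
    proof (rule ccontr)
      assume "\<not> ?thesis"
      then obtain z where "z \<in> {\<Gamma> x - c | c. c \<in> C - {0}}" "z \<in> \<Gamma> ` X" by blast
      then obtain c x' where "c \<in> C - {0}" "x' \<in> X" "\<Gamma> x - c = \<Gamma> x'" by blast
      hence "y \<in> M" unfolding M_def msum_def xy(2)
        by (metis (mono_tags, lifting) diff_add_cancel image_eqI mem_Collect_eq)
      thus False using y by simp
    qed
    thus ?thesis using xy unfolding minimizer_def by simp
  qed
  have V: "snd ` Sb \<subseteq> P" using SbS YP unfolding Y_a_def by auto
  have VM: "snd ` Sb - M \<subseteq> \<Gamma> ` Xb"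
  proof
    fix y assume "y \<in> snd ` Sb - M"
    then obtain x where "(x, y) \<in> Sb" "y \<notin> M" by force
    thus "y \<in> \<Gamma> ` Xb" using pair Xb_def by force
  qed
  obtain Xs where Xs: "solution_CVOP C X \<Gamma> Xs" using assms(4) by auto
  have GXs: "\<Gamma> x \<in> convex hull (\<Gamma> ` Xb)" if xXs: "x \<in> Xs" for x
  proof -
    have m: "minimizer C X \<Gamma> x" using Xs xXs unfolding solution_CVOP_def by blast
    hence xX: "x \<in> X" unfolding minimizer_def by blast
    have "\<Gamma> x + 0 \<in> P" unfolding P_def msum_def using xX oc_zero[OF oc] by blast
    hence inh: "\<Gamma> x \<in> convex hull (snd ` Sb)" using assms(6) YP by simp
    have nM: "\<Gamma> x \<notin> M"
    proof
      assume "\<Gamma> x \<in> M"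
      then obtain x' c where "x' \<in> X" "c \<in> C - {0}" "\<Gamma> x = \<Gamma> x' + c"
        unfolding M_def msum_def by auto
      hence "\<Gamma> x - c \<in> {\<Gamma> x - c | c. c \<in> C - {0}} \<inter> \<Gamma> ` X" by auto
      thus False using m unfolding minimizer_def by blast
    qed
    have "\<Gamma> x \<in> convex hull (snd ` Sb - M)"
      using key[OF oc Pc[unfolded P_def] V[unfolded P_def] inh nM[unfolded M_def]] M_def by simp
    thus ?thesis using hull_mono[OF VM] by blast
  qed
  have sub1: "msum (\<Gamma> ` Xs) C \<subseteq> convex hull (msum (\<Gamma> ` Xb) C)"
  proof
    fix z assume "z \<in> msum (\<Gamma> ` Xs) C"
    then obtain x c where xc: "x \<in> Xs" "c \<in> C" "z = \<Gamma> x + c" unfolding msum_def by auto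
    have "c + \<Gamma> x \<in> (\<lambda>a. c + a) ` (convex hull (\<Gamma> ` Xb))" using GXs[OF xc(1)] by blast
    hence "c + \<Gamma> x \<in> convex hull ((\<lambda>a. c + a) ` (\<Gamma> ` Xb))" by (simp add: convex_hull_translation)
    moreover have "(\<lambda>a. c + a) ` (\<Gamma> ` Xb) \<subseteq> msum (\<Gamma> ` Xb) C"
      unfolding msum_def using xc(2) by (auto simp: add.commute)
    ultimately show "z \<in> convex hull (msum (\<Gamma> ` Xb) C)"
      using hull_mono xc(3) by (metis add.commute subsetD)
  qed
  have up: "upper_image C X \<Gamma> = closure (convex hull (msum (\<Gamma> ` Xs) C))"
    using Xs unfolding solution_CVOP_def infimizer_def by blast
  have sub2: "convex hull (msum (\<Gamma> ` Xb) C) \<subseteq> P"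
  proof (rule hull_minimal)
    show "msum (\<Gamma> ` Xb) C \<subseteq> P" using XbX unfolding P_def msum_def by blast
    show "convex P" by (rule Pc)
  qed
  have "upper_image C X \<Gamma> = closure (convex hull (msum (\<Gamma> ` Xb) C))"
  proof
    show "upper_image C X \<Gamma> \<subseteq> closure (convex hull (msum (\<Gamma> ` Xb) C))"
      unfolding up by (intro closure_mono hull_minimal sub1 convex_convex_hull)
    show "closure (convex hull (msum (\<Gamma> ` Xb) C)) \<subseteq> upper_image C X \<Gamma>"
      unfolding upper_image_def P_def[symmetric] using sub2 by (rule closure_mono)
  qed
  hence "solution_CVOP C X \<Gamma> Xb"
    unfolding solution_CVOP_def infimizer_def using XbX minim by auto
  thus ?thesis unfolding Xb_def M_def .
qed

end
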